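(* With $z^3=t(1-t)^2$, one has \[ \sum_{i\ge0}(\tau_i-t\tau_{i-1})w^i=\frac{w(1-tw)}{1-2w+w^2-z^3w^3}=\frac{w}{1-(2-t)w+(1-t)^2w^2}, \] (with $\tau_{-1}=0$), and hence, for all $i\ge0$, \[ \tau_i-t\tau_{i-1}=\frac{\mu_3^i-\mu_2^i}{\mu_3-\mu_2},\qquad \mu_{2,3}=\frac{2-t\mp W}{2},\ W=\sqrt{4t-3t^2}. \] Consequently, for every fixed $i\ge1$, $\lim_{n\to\infty}D_{n,i}/D_n=\dfrac{t^i}{z^{2i+1}}\cdot\dfrac{\mu_3^i-\mu_2^i}{\mu_3-\mu_2}$ (coefficientwise as formal power series in $z$).
   Context: $\tau_i=\tau_i(z)$ are defined by $\sum_{i\ge0}\tau_iw^i=\frac{w}{1-2w+w^2-z^3w^3}$. $t$ is the power series in $z$ with $z^3=t(1-t)^2$, $t=z^3+O(z^6)$. $\mu_2,\mu_3$ are the roots of $X^2-(2-t)X+(1-t)^2$, so $\mu_2+\mu_3=2-t$, $\mu_2\mu_3=(1-t)^2$. For $h\ge1$, $D_h$ is the determinant of the $h\times h$ matrix $T_h$ (indices $0,\dots,h-1$) with $(T_h)_{p,p}=1$, $(T_h)_{p,p+1}=-2z$, $(T_h)_{p,p+2}=z^2$, $(T_h)_{p+1,p}=-z^2$, other entries $0$; $D_0=1$. $D_{n,i}$ is the determinant of $T_n^{\mathsf T}$ with its $i$-th column (columns numbered $1,\dots,n$) replaced by $(1,0,\dots,0)^{\mathsf T}$. *)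

theory Defs
  imports "HOL-Computational_Algebra.Formal_Power_Series" "Jordan_Normal_Form.Determinant"
begin

text \<open>All power series in z are of type complex fps (z = fps_X).
  Bivariate generating functions in w are of type complex fps fps (w = outer fps_X),
  with the inner series embedded by fps_const.\<close>

definition tau_gf :: "complex fps fps" where
  "tau_gf = fps_X / (1 - 2 * fps_X + fps_X ^ 2 - fps_const (fps_X ^ 3) * fps_X ^ 3)"

definition tau :: "nat \<Rightarrow> complex fps" where
  "tau i = fps_nth tau_gf i"

definition tau_prev :: "nat \<Rightarrow> complex fps" where
  "tau_prev i = (if i = 0 then 0 else tau (i - 1))"

definition tser :: "complex fps" where
  "tser = (THE t. fps_X ^ 3 = t * (1 - t) ^ 2 \<and> (\<forall>k<6. fps_nth t k = fps_nth (fps_X ^ 3 :: complex fps) k))"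

definition Tmat :: "nat \<Rightarrow> complex fps mat" where
  "Tmat h = mat h h (\<lambda>(p, q).
     if q = p then 1
     else if q = p + 1 then - 2 * fps_X
     else if q = p + 2 then fps_X ^ 2
     else if p = q + 1 then - (fps_X ^ 2)
     else 0)"

definition Dh :: "nat \<Rightarrow> complex fps" where
  "Dh h = det (Tmat h)"

text \<open>D_{n,i}: determinant of (T_n)^T with its i-th column (columns numbered 1..n)
  replaced by (1,0,...,0)^T.\<close>
definition Dni :: "nat \<Rightarrow> nat \<Rightarrow> complex fps" where
  "Dni n i = det (mat n n (\<lambda>(p, q).
      if q = i - 1 then (if p = 0 then 1 else 0) else transpose_mat (Tmat n) $$ (p, q)))"

definition is_ring_hom :: "('a :: ring_1 \<Rightarrow> 'b :: ring_1) \<Rightarrow> bool" where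
  "is_ring_hom \<phi> \<longleftrightarrow> \<phi> 1 = 1 \<and> (\<forall>x y. \<phi> (x + y) = \<phi> x + \<phi> y) \<and> (\<forall>x y. \<phi> (x * y) = \<phi> x * \<phi> y)"

end

theory Submission
  imports Defs
begin


lemma tser_sub6:
  fixes s :: "complex fps"
  assumes s0: "fps_nth s 0 = 0" and eq: "fps_X ^ 3 = s * (1 - s) ^ 2"
  shows "\<forall>k<6. fps_nth s k = fps_nth (fps_X ^ 3 :: complex fps) k"
proof -
  have e2: "s = fps_X ^ 3 + s^2 * (2 - s)" using eq by (simp add: algebra_simps power2_eq_square)
  have sne: "s \<noteq> 0" using eq by auto
  have tne: "(2 - s) \<noteq> 0"
  proof
    assume "2 - s = 0" then have "fps_nth (2 - s) 0 = 0" by simp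
    with s0 show False by simp
  qed
  define d where "d = subdegree s"
  have d1: "d \<ge> 1" using s0 sne unfolding d_def by (metis less_one not_less subdegree_eq_0_iff)
  have sd: "subdegree (s^2 * (2 - s)) \<ge> 2 * d"
    using sne tne by (simp add: subdegree_mult subdegree_power d_def)
  have d3: "d \<ge> 3"
  proof (rule ccontr)
    assume "\<not> d \<ge> 3"
    then have "d < 3" by simp
    have "fps_nth s d = fps_nth (fps_X ^ 3 :: complex fps) d + fps_nth (s^2 * (2 - s)) d"
      by (subst e2, simp)
    also have "fps_nth (fps_X ^ 3 :: complex fps) d = 0" using \<open>d<3\<close> by simp
    also have "fps_nth (s^2 * (2 - s)) d = 0" using sd d1 by (intro nth_less_subdegree_zero) simp
    finally have "fps_nth s d = 0" by simp
    moreover have "fps_nth s d \<noteq> 0" using sne unfolding d_def by simp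
    ultimately show False by simp
  qed
  show ?thesis
  proof (intro allI impI)
    fix k :: nat assume "k < 6"
    have "fps_nth s k = fps_nth (fps_X ^ 3 :: complex fps) k + fps_nth (s^2 * (2 - s)) k"
      by (subst e2, simp)
    also have "fps_nth (s^2 * (2 - s)) k = 0" using sd d3 \<open>k<6\<close> by (intro nth_less_subdegree_zero) simp
    finally show "fps_nth s k = fps_nth (fps_X ^ 3 :: complex fps) k" by simp
  qed
qed

lemma tser_uniq:
  fixes s r :: "complex fps"
  assumes s0: "fps_nth s 0 = 0" and eqs: "fps_X ^ 3 = s * (1 - s) ^ 2"
  and r0: "fps_nth r 0 = 0" and eqr: "fps_X ^ 3 = r * (1 - r) ^ 2"
  shows "s = r"
proof -
  have "(s - r) * (1 - 2 * (s + r) + s^2 + s*r + r^2) = s * (1 - s) ^ 2 - r * (1 - r) ^ 2"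
    by (simp add: algebra_simps power2_eq_square power3_eq_cube)
  also have "\<dots> = 0" using eqs eqr by simp
  finally have h: "(s - r) * (1 - 2 * (s + r) + s^2 + s*r + r^2) = 0" .
  have "fps_nth (1 - 2 * (s + r) + s^2 + s*r + r^2) 0 = 1" using s0 r0 by (simp add: power2_eq_square)
  then have "(1 - 2 * (s + r) + s^2 + s*r + r^2) \<noteq> 0" by (metis fps_zero_nth zero_neq_one)
  with h show ?thesis by simp
qed

lemma tser_exists: "\<exists>s :: complex fps. fps_nth s 0 = 0 \<and> fps_X ^ 3 = s * (1 - s) ^ 2"
proof -
  define g :: "complex fps" where "g = fps_X * (1 - fps_X) ^ 2"
  have g0: "fps_nth g 0 = 0" by (simp add: g_def)
  have g1: "fps_nth g 1 = 1" by (simp add: g_def power2_eq_square algebra_simps)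
  define s where "s = fps_inv g oo fps_X ^ 3"
  have x30: "fps_nth (fps_X ^ 3 :: complex fps) 0 = 0" by simp
  have ig0: "fps_nth (fps_inv g) 0 = 0" by (simp add: fps_inv_def)
  have s0: "fps_nth s 0 = 0" by (simp add: s_def ig0)
  have "g oo s = (g oo fps_inv g) oo fps_X ^ 3" unfolding s_def
    by (rule fps_compose_assoc[OF x30 ig0])
  also have "\<dots> = fps_X ^ 3" using fps_inv_right[OF g0] g1 by simp
  finally have a: "g oo s = fps_X ^ 3" .
  have "g oo s = s * (1 - s) ^ 2"
    unfolding g_def using s0
    by (simp add: fps_compose_mult_distrib fps_compose_power[symmetric] fps_compose_sub_distrib)
  with a s0 show ?thesis by metis
qed

lemma tser_props: "fps_nth tser 0 = 0" "fps_X ^ 3 = tser * (1 - tser) ^ 2"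
proof -
  obtain s :: "complex fps" where s: "fps_nth s 0 = 0" "fps_X ^ 3 = s * (1 - s) ^ 2"
    using tser_exists by blast
  have "tser = s"
    unfolding tser_def
  proof (rule the_equality)
    show "fps_X ^ 3 = s * (1 - s) ^ 2 \<and> (\<forall>k<6. fps_nth s k = fps_nth (fps_X ^ 3 :: complex fps) k)"
      using s tser_sub6 by blast
  next
    fix r :: "complex fps" assume r: "fps_X ^ 3 = r * (1 - r) ^ 2 \<and> (\<forall>k<6. fps_nth r k = fps_nth (fps_X ^ 3 :: complex fps) k)"
    then have "fps_nth r 0 = 0" by (metis fps_X_power_nth zero_less_numeral less_numeral_extra(3) numeral_eq_iff zero_neq_numeral)
    then show "r = s" using tser_uniq r s by blast
  qed
  then show "fps_nth tser 0 = 0" "fps_X ^ 3 = tser * (1 - tser) ^ 2" using s by auto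
qed



lemma outer_inv:
  fixes f :: "complex fps fps"
  assumes "fps_nth f 0 = 1"
  shows "f * inverse f = 1" "g / f = g * inverse f"
proof -
  have "inverse f = fps_right_inverse f (inverse (fps_nth f 0))" by (simp add: fps_inverse_def)
  also have "\<dots> = fps_right_inverse f 1" using assms by simp
  finally have e: "inverse f = fps_right_inverse f 1" .
  show "f * inverse f = 1" unfolding e by (rule fps_right_inverse) (simp add: assms)
  have "subdegree f = 0" using assms by (simp add: subdegree_eq_0_iff)
  then show "g / f = g * inverse f" by (rule fps_divide_unit')
qed

abbreviation QQ :: "complex fps fps" where
  "QQ \<equiv> 1 - 2 * fps_X + fps_X ^ 2 - fps_const (fps_X ^ 3) * fps_X ^ 3"
abbreviation PP :: "complex fps fps" where
  "PP \<equiv> 1 - fps_const (2 - tser) * fps_X + fps_const ((1 - tser) ^ 2) * fps_X ^ 2"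

lemma QQ0: "fps_nth QQ 0 = 1" by simp
lemma PP0: "fps_nth PP 0 = 1" by simp

lemma QQ_fact: "QQ = (1 - fps_const tser * fps_X) * PP"
proof -
  have o: "fps_const (1 - tser) = 1 - fps_const tser"
    by (metis fps_const_1_eq_1 fps_const_sub)
  have tw: "fps_const (2 :: complex fps) = 2"
    by (metis fps_const_1_eq_1 fps_const_add one_add_one)
  have c: "fps_const (fps_X ^ 3 :: complex fps) = fps_const tser * (1 - fps_const tser)^2"
    by (subst tser_props(2)) (simp only: fps_const_mult fps_const_power o[symmetric])
  have c2: "fps_const (2 - tser) = 2 - fps_const tser"
    by (metis tw fps_const_sub)
  have c3: "fps_const ((1 - tser)^2) = (1 - fps_const tser)^2"
    by (simp only: fps_const_power o[symmetric])
  have gen: "\<And>(c::complex fps fps) x. 1 - 2*x + x^2 - c*(1-c)^2*x^3 = (1 - c*x)*(1 - (2-c)*x + (1-c)^2*x^2)"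
    by (simp add: algebra_simps power2_eq_square power3_eq_cube)
  show ?thesis unfolding c c2 c3 by (rule gen)
qed

lemma part12:
  "Abs_fps (\<lambda>i. tau i - tser * tau_prev i)
       = fps_X * (1 - fps_const tser * fps_X)
           / (1 - 2 * fps_X + fps_X ^ 2 - fps_const (fps_X ^ 3) * fps_X ^ 3)"
  "Abs_fps (\<lambda>i. tau i - tser * tau_prev i)
       = fps_X / (1 - fps_const (2 - tser) * fps_X + fps_const ((1 - tser) ^ 2) * fps_X ^ 2)"
proof -
  have A: "Abs_fps (\<lambda>i. tau i - tser * tau_prev i) = tau_gf - fps_const tser * (fps_X * tau_gf)"
    by (rule fps_ext) (simp add: tau_def tau_prev_def)
  have tg: "tau_gf = fps_X * inverse QQ" unfolding tau_gf_def by (rule outer_inv(2)[OF QQ0])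
  show 1: "Abs_fps (\<lambda>i. tau i - tser * tau_prev i) = fps_X * (1 - fps_const tser * fps_X) / QQ"
    unfolding A tg outer_inv(2)[OF QQ0] by (simp add: algebra_simps)
  have "fps_X * (1 - fps_const tser * fps_X) * inverse QQ
      = fps_X * (1 - fps_const tser * fps_X) * inverse QQ * (PP * inverse PP)"
    using outer_inv(1)[OF PP0] by simp
  also have "\<dots> = fps_X * inverse PP * (QQ * inverse QQ)"
    unfolding QQ_fact by (simp only: ac_simps)
  also have "\<dots> = fps_X * inverse PP" using outer_inv(1)[OF QQ0] by simp
  finally show "Abs_fps (\<lambda>i. tau i - tser * tau_prev i) = fps_X / PP"
    unfolding 1 outer_inv(2)[OF QQ0] outer_inv(2)[OF PP0] .
qed

definition cc :: "nat \<Rightarrow> complex fps" where "cc m = fps_nth (fps_X / PP) m"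

lemma cc_rec: "cc 0 = 0" "cc 1 = 1"
  "cc (Suc (Suc m)) = (2 - tser) * cc (Suc m) - (1 - tser)^2 * cc m"
proof -
  define C where "C = fps_X / PP"
  have "PP * C = fps_X" unfolding C_def outer_inv(2)[OF PP0]
    using outer_inv(1)[OF PP0] by (simp add: ac_simps)
  moreover have "PP * C = C - fps_const (2 - tser) * (fps_X * C) + fps_const ((1 - tser) ^ 2) * (fps_X^2 * C)"
    by (simp add: algebra_simps)
  ultimately have E: "C - fps_const (2 - tser) * (fps_X * C) + fps_const ((1 - tser) ^ 2) * (fps_X^2 * C) = fps_X"
    by simp
  have n: "fps_nth C n - (2 - tser) * (if n = 0 then 0 else fps_nth C (n - 1))
       + (1 - tser)^2 * (if n < 2 then 0 else fps_nth C (n - 2)) = (if n = 1 then 1 else 0)" for n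
    using arg_cong[OF E, of "\<lambda>f. fps_nth f n"] by (simp add: fps_X_power_mult_nth)
  show c0: "cc 0 = 0" using n[of 0] by (simp add: cc_def C_def)
  show "cc 1 = 1" using n[of 1] c0 by (simp add: cc_def C_def)
  show "cc (Suc (Suc m)) = (2 - tser) * cc (Suc m) - (1 - tser)^2 * cc m"
    using n[of "Suc (Suc m)"] by (simp add: cc_def C_def algebra_simps)
qed

lemma divaux: "(a::'a::field) * (x/d) - b*(y/d) = (a*x - b*y)/d"
  by (simp add: diff_divide_distrib)

lemma part3:
  fixes \<phi> :: "complex fps \<Rightarrow> 'b :: field" and \<mu>2 \<mu>3 :: 'b
  assumes h: "is_ring_hom \<phi>" and inj: "inj \<phi>" and s: "\<mu>2 + \<mu>3 = \<phi> (2 - tser)"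
    and p: "\<mu>2 * \<mu>3 = \<phi> ((1 - tser) ^ 2)"
  shows "\<phi> (tau i - tser * tau_prev i) = (\<mu>3 ^ i - \<mu>2 ^ i) / (\<mu>3 - \<mu>2)"
proof -
  have one: "\<phi> 1 = 1" and add: "\<And>x y. \<phi> (x + y) = \<phi> x + \<phi> y"
    and mul: "\<And>x y. \<phi> (x * y) = \<phi> x * \<phi> y" using h by (auto simp: is_ring_hom_def)
  have zero: "\<phi> 0 = 0" using add[of 0 0] by (metis add.right_neutral add_left_cancel)
  have sub: "\<phi> (x - y) = \<phi> x - \<phi> y" for x y using add[of "x - y" y] by (simp add: algebra_simps)
  have tne: "tser \<noteq> 0" using tser_props(2) by auto
  define E where "E = (2 - tser)^2 - ((1 - tser)^2 + (1 - tser)^2 + (1 - tser)^2 + (1 - tser)^2)"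
  have E: "E = tser * (4 - 3 * tser)" unfolding E_def by (simp add: algebra_simps power2_eq_square)
  have "fps_nth (4 - 3 * tser) 0 \<noteq> 0" using tser_props(1) by simp
  then have "4 - 3 * tser \<noteq> 0" by (metis fps_zero_nth)
  then have Ene: "E \<noteq> 0" using tne E by simp
  have "\<phi> E = \<phi> (2 - tser) * \<phi> (2 - tser) - (\<phi> ((1 - tser)^2) + \<phi> ((1 - tser)^2) + \<phi> ((1 - tser)^2) + \<phi> ((1 - tser)^2))"
    unfolding E_def power2_eq_square[of "2 - tser"] by (simp only: sub add mul)
  also have "\<dots> = (\<mu>2 + \<mu>3)^2 - 4 * (\<mu>2 * \<mu>3)" unfolding s[symmetric] p[symmetric]
    by (simp add: algebra_simps power2_eq_square)
  also have "\<dots> = (\<mu>3 - \<mu>2)^2" by (simp add: algebra_simps power2_eq_square)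
  finally have phE: "\<phi> E = (\<mu>3 - \<mu>2)^2" .
  have dne: "\<mu>3 - \<mu>2 \<noteq> 0"
  proof
    assume "\<mu>3 - \<mu>2 = 0"
    then have "\<phi> E = \<phi> 0" using phE zero by simp
    then have "E = 0" using inj by (simp add: inj_eq)
    with Ene show False by simp
  qed
  have key: "\<phi> (cc i) = (\<mu>3 ^ i - \<mu>2 ^ i) / (\<mu>3 - \<mu>2)" for i
  proof (induction i rule: nat_less_induct)
    case (1 n)
    show ?case
    proof (cases n)
      case 0 then show ?thesis by (simp add: cc_rec zero)
    next
      case (Suc m)
      show ?thesis
      proof (cases m)
        case 0 then show ?thesis using Suc dne by (simp add: cc_rec(2)[unfolded One_nat_def] one)
      next
        case (Suc k)
        have ih1: "\<phi> (cc (Suc k)) = (\<mu>3 ^ Suc k - \<mu>2 ^ Suc k) / (\<mu>3 - \<mu>2)"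
          using 1 Suc \<open>n = Suc m\<close> by simp
        have ih0: "\<phi> (cc k) = (\<mu>3 ^ k - \<mu>2 ^ k) / (\<mu>3 - \<mu>2)"
          using 1 Suc \<open>n = Suc m\<close> by simp
        have "\<phi> (cc n) = (\<mu>2 + \<mu>3) * \<phi> (cc (Suc k)) - (\<mu>2 * \<mu>3) * \<phi> (cc k)"
          unfolding s p using Suc \<open>n = Suc m\<close> by (simp add: cc_rec sub mul)
        also have "\<dots> = (\<mu>3 ^ n - \<mu>2 ^ n) / (\<mu>3 - \<mu>2)"
        proof -
          have num: "(\<mu>2+\<mu>3)*(\<mu>3^Suc k - \<mu>2^Suc k) - (\<mu>2*\<mu>3)*(\<mu>3^k - \<mu>2^k) = \<mu>3^Suc(Suc k) - \<mu>2^Suc(Suc k)"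
            by (simp add: algebra_simps)
          have "(\<mu>2 + \<mu>3) * ((\<mu>3 ^ Suc k - \<mu>2 ^ Suc k) / (\<mu>3 - \<mu>2)) - (\<mu>2 * \<mu>3) * ((\<mu>3 ^ k - \<mu>2 ^ k) / (\<mu>3 - \<mu>2))
             = ((\<mu>2+\<mu>3)*(\<mu>3^Suc k - \<mu>2^Suc k) - (\<mu>2*\<mu>3)*(\<mu>3^k - \<mu>2^k)) / (\<mu>3 - \<mu>2)"
            by (rule divaux)
          then show ?thesis unfolding ih1 ih0 using Suc \<open>n = Suc m\<close> num by (simp only:)
        qed
        finally show ?thesis .
      qed
    qed
  qed
  have "tau i - tser * tau_prev i = cc i"
    unfolding cc_def part12(2)[symmetric] by simp
  then show ?thesis using key by simp
qed



definition tp :: "complex fps" where "tp = fps_shift 3 tser"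

lemma tser_X3: "tser = fps_X ^ 3 * tp"
proof (rule fps_ext)
  fix k
  have s6: "\<forall>k<6. fps_nth tser k = fps_nth (fps_X ^ 3 :: complex fps) k"
    using tser_sub6 tser_props by blast
  show "fps_nth tser k = fps_nth (fps_X ^ 3 * tp) k"
  proof (cases "k < 3")
    case True then show ?thesis using s6 by (simp add: fps_X_power_mult_nth)
  next
    case False then show ?thesis by (simp add: fps_X_power_mult_nth tp_def)
  qed
qed

lemma tp_inv: "tp * (1 - tser)^2 = 1"
proof -
  have "fps_X ^ 3 * (tp * (1 - tser)^2) = tser * (1 - tser)^2"
    by (metis mult.assoc tser_X3)
  also have "\<dots> = fps_X ^ 3 * 1" using tser_props(2) by simp
  finally show ?thesis by (subst (asm) mult_left_cancel) auto
qed

lemma alg_bracket: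
  fixes tp t x3 c1 c2 c3 c4 :: "complex fps"
  assumes tps: "tp * (1 - t)^2 = 1" and t: "t = x3 * tp"
    and c3: "c3 = (2 - t) * c2 - (1 - t)^2 * c1" and c4: "c4 = (2 - t) * c3 - (1 - t)^2 * c2"
  shows "tp^2 * c3 - 2 * tp * c2 + c1 - x3 * tp^3 * c4 = 0"
proof -
  define s where "s = (1 - t)^2"
  have tps': "tp * s = 1" using tps s_def by simp
  have L: "c3 - 2*s*c2 + s^2*c1 - t*c4 = 0"
    unfolding c4 c3 s_def by (simp add: algebra_simps power2_eq_square)
  have e1: "(tp^2 * c3 - 2 * tp * c2 + c1 - x3 * tp^3 * c4) * s^2
      = (tp*s)^2*c3 - 2*(tp*s)*s*c2 + s^2*c1 - (x3*tp)*(tp*s)^2*c4"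
    by (simp add: algebra_simps power2_eq_square power3_eq_cube)
  also have "\<dots> = c3 - 2*s*c2 + s^2*c1 - t*c4" using tps' t by simp
  finally have e2: "(tp^2 * c3 - 2 * tp * c2 + c1 - x3 * tp^3 * c4) * s^2 = 0" using L by simp
  have "tp^2 * c3 - 2 * tp * c2 + c1 - x3 * tp^3 * c4
      = (tp^2 * c3 - 2 * tp * c2 + c1 - x3 * tp^3 * c4) * (tp * s)^2" using tps' by simp
  also have "\<dots> = tp^2 * ((tp^2 * c3 - 2 * tp * c2 + c1 - x3 * tp^3 * c4) * s^2)"
    by (simp add: algebra_simps power2_eq_square)
  finally show ?thesis using e2 by simp
qed



definition ww :: "nat \<Rightarrow> complex fps" where "ww q = tp ^ Suc q * cc (Suc q)"
definition yy :: "nat \<Rightarrow> complex fps" where "yy q = fps_X ^ q * ww q"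

lemma yy_eq: "tser ^ Suc q / fps_X ^ (2 * Suc q + 1) * cc (Suc q) = yy q"
proof -
  have e: "(3::nat) * Suc q = (2 * Suc q + 1) + q" by simp
  have "tser ^ Suc q = (fps_X^3)^Suc q * tp^Suc q" by (simp add: tser_X3 power_mult_distrib)
  also have "(fps_X^3)^Suc q = (fps_X::complex fps)^(3*Suc q)" by (simp only: power_mult)
  also have "\<dots> = fps_X ^ (2 * Suc q + 1) * fps_X ^ q" by (simp only: e power_add)
  finally have "tser ^ Suc q = fps_X ^ (2 * Suc q + 1) * (fps_X ^ q * tp ^ Suc q)" by (simp only: mult.assoc)
  then have "tser ^ Suc q / fps_X ^ (2 * Suc q + 1) = fps_X ^ q * tp ^ Suc q"
    by simp
  then show ?thesis by (simp add: yy_def ww_def ac_simps)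
qed

lemma ww_rec: "ww p - 2 * (if p = 0 then 0 else ww (p - 1)) + (if p < 2 then 0 else ww (p - 2))
   - fps_X ^ 3 * ww (Suc p) = (if p = 0 then 1 else 0)"
proof (cases p)
  case 0
  have "ww 0 - fps_X ^ 3 * ww 1 = tp - (fps_X ^ 3 * tp) * tp * (2 - tser)"
    by (simp add: ww_def cc_rec(2)[unfolded One_nat_def] cc_rec(1) cc_rec(3)[of 0] numeral_2_eq_2 power2_eq_square ac_simps)
  also have "\<dots> = tp * (1 - tser)^2"
    unfolding tser_X3[symmetric] by (simp add: algebra_simps power2_eq_square)
  finally show ?thesis using 0 tp_inv by simp
next
  case (Suc m)
  have B: "tp^2 * cc (Suc (Suc m)) - 2 * tp * cc (Suc m) + cc m - fps_X^3 * tp^3 * cc (Suc (Suc (Suc m))) = 0"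
    by (rule alg_bracket[OF tp_inv tser_X3 cc_rec(3)[of m] cc_rec(3)[of "Suc m"]])
  have last: "(if Suc m < 2 then 0 else ww (Suc m - 2)) = tp ^ m * cc m"
    by (cases m) (simp_all add: ww_def cc_rec(1))
  have "ww p - 2 * (if p = 0 then 0 else ww (p - 1)) + (if p < 2 then 0 else ww (p - 2))
      - fps_X ^ 3 * ww (Suc p)
      = tp ^ m * (tp^2 * cc (Suc (Suc m)) - 2 * tp * cc (Suc m) + cc m - fps_X^3 * tp^3 * cc (Suc (Suc (Suc m))))"
    unfolding Suc last by (simp add: ww_def algebra_simps numeral_3_eq_3 numeral_2_eq_2)
  then show ?thesis using B Suc by simp
qed

lemma yy_rec: "yy p - 2 * fps_X * (if p = 0 then 0 else yy (p - 1)) + fps_X^2 * (if p < 2 then 0 else yy (p - 2))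
   - fps_X^2 * yy (Suc p) = (if p = 0 then 1 else 0)"
proof -
  have a: "fps_X * (if p = 0 then 0 else yy (p - 1)) = fps_X ^ p * (if p = 0 then 0 else ww (p - 1))"
    by (cases p) (simp_all add: yy_def)
  have b: "fps_X^2 * (if p < 2 then 0 else yy (p - 2)) = fps_X ^ p * (if p < 2 then 0 else ww (p - 2))"
  proof (cases "p < 2")
    case False then obtain m where "p = m + 2" by (metis add.commute le_add_diff_inverse not_less)
    then show ?thesis by (simp add: yy_def power_add power2_eq_square ac_simps)
  qed simp
  have c: "fps_X^2 * yy (Suc p) = fps_X ^ p * (fps_X ^ 3 * ww (Suc p))"
    by (simp add: yy_def power_add[symmetric] power2_eq_square power3_eq_cube ac_simps)
  have "yy p - 2 * fps_X * (if p = 0 then 0 else yy (p - 1)) + fps_X^2 * (if p < 2 then 0 else yy (p - 2))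
      - fps_X^2 * yy (Suc p) = fps_X ^ p * (ww p - 2 * (if p = 0 then 0 else ww (p - 1)) + (if p < 2 then 0 else ww (p - 2))
   - fps_X ^ 3 * ww (Suc p))"
    unfolding mult.assoc[of 2] a b c by (simp add: yy_def algebra_simps)
  also have "\<dots> = (if p = 0 then 1 else 0)" unfolding ww_rec by simp
  finally show ?thesis .
qed



lemma det_replace_col_adj:
  fixes A :: "'a :: comm_ring_1 mat"
  assumes A: "A \<in> carrier_mat n n" and b: "b \<in> carrier_vec n" and k: "k < n"
  shows "det (replace_col A b k) = (adj_mat A *\<^sub>v b) $ k"
proof -
  let ?Ab = "replace_col A b k"
  have Ab: "?Ab \<in> carrier_mat n n" using A by (auto simp: replace_col_def)
  have "(adj_mat A *\<^sub>v b) $ k = row (adj_mat A) k \<bullet> b" using adj_mat[OF A] b k by auto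
  also have "\<dots> = det (replace_col A b k)" unfolding scalar_prod_def using b k A
    by (subst laplace_expansion_column[OF Ab k], auto intro!: sum.cong arg_cong[of _ _ det]
      arg_cong[of _ _ "\<lambda> x. _ * x"] eq_matI
      simp: replace_col_def adj_mat_def Matrix.row_def cofactor_def mat_delete_def ac_simps)
  finally show ?thesis by simp
qed

lemma Tmat_carrier: "Tmat n \<in> carrier_mat n n" by (simp add: Tmat_def)

lemma Tmat_entry: "r < n \<Longrightarrow> p < n \<Longrightarrow> Tmat n $$ (r, p) =
   (if p = r then 1 else if p = r + 1 then - 2 * fps_X else if p = r + 2 then fps_X ^ 2
    else if r = p + 1 then - (fps_X ^ 2) else 0)"
  by (simp add: Tmat_def)

lemma Dh0: "fps_nth (Dh n) 0 = 1"
proof -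
  interpret h: comm_ring_hom "\<lambda>f::complex fps. fps_nth f 0"
    by unfold_locales auto
  have "map_mat (\<lambda>f. fps_nth f 0) (Tmat n) = 1\<^sub>m n"
    by (rule eq_matI) (auto simp: Tmat_def)
  then have "det (map_mat (\<lambda>f. fps_nth f 0) (Tmat n)) = 1" by simp
  then show ?thesis unfolding Dh_def by simp
qed



lemma sum_delta_cond: "(\<Sum>r\<in>{0..<(n::nat)}. if r = a then g else (0::'a::comm_monoid_add)) = (if a < n then g else 0)"
  by (induct n) auto

lemma Ay_entry:
  assumes p: "p < n"
  shows "(\<Sum>r\<in>{0..<n}. Tmat n $$ (r,p) * yy r) = (if p = 0 then 1 else 0) + (if Suc p = n then fps_X^2 * yy n else 0)"
proof -
  have pt: "Tmat n $$ (r,p) * yy r = (if r = p then yy p else 0)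
     + (if r = p - 1 then (- 2 * fps_X * (if p = 0 then 0 else yy (p - 1))) else 0)
     + (if r = p - 2 then (fps_X^2 * (if p < 2 then 0 else yy (p - 2))) else 0)
     + (if r = Suc p then - (fps_X^2) * yy (Suc p) else 0)" if r: "r \<in> {0..<n}" for r
    using r p by (auto simp: Tmat_entry)
  have "(\<Sum>r\<in>{0..<n}. Tmat n $$ (r,p) * yy r) =
     yy p + (- 2 * fps_X * (if p = 0 then 0 else yy (p - 1))) + (fps_X^2 * (if p < 2 then 0 else yy (p - 2)))
     + (if Suc p < n then - (fps_X^2) * yy (Suc p) else 0)"
    apply (subst sum.cong[OF refl pt], assumption)
    apply (simp only: sum.distrib sum_delta_cond)
    using p by (simp add: less_imp_diff_less)
  also have "\<dots> = (if p = 0 then 1 else 0) + fps_X^2 * yy (Suc p) + (if Suc p < n then - (fps_X^2) * yy (Suc p) else 0)"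
    using yy_rec[of p] by (simp add: algebra_simps split del: if_split)
  also have "\<dots> = (if p = 0 then 1 else 0) + (if Suc p = n then fps_X^2 * yy n else 0)"
    using p by auto
  finally show ?thesis .
qed



lemma adj_vec_entry:
  fixes A :: "'a :: comm_ring_1 mat"
  assumes A: "A \<in> carrier_mat n n" and j: "j < n"
  shows "(adj_mat A *\<^sub>v vec n f) $ j = (\<Sum>p\<in>{0..<n}. adj_mat A $$ (j, p) * f p)"
proof -
  have ad: "adj_mat A \<in> carrier_mat n n" using adj_mat(1)[OF A] .
  show ?thesis using ad j
    by (auto simp: scalar_prod_def intro!: sum.cong)
qed

lemma main_ratio:
  assumes i1: "1 \<le> i" and iN: "i \<le> n" and kN: "k < n"
  shows "fps_nth (Dni n i / Dh n) k = fps_nth (yy (i - 1)) k"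
proof -
  define A where "A = transpose_mat (Tmat n)"
  define j where "j = i - 1"
  have A: "A \<in> carrier_mat n n" unfolding A_def using Tmat_carrier by simp
  have j: "j < n" using i1 iN unfolding j_def by simp
  have n0: "0 < n" using j by simp
  define G where "G = adj_mat A"
  define E where "E = fps_X^2 * yy n"
  define bb where "bb = vec n (\<lambda>p. (if p = 0 then 1 else 0) + (if Suc p = n then E else (0::complex fps)))"
  have yv: "vec n yy \<in> carrier_vec n" by simp
  have Ay: "A *\<^sub>v vec n yy = bb"
  proof (rule eq_vecI)
    fix p assume "p < dim_vec bb"
    then have p: "p < n" by (simp add: bb_def)
    have "(A *\<^sub>v vec n yy) $ p = (\<Sum>r\<in>{0..<n}. A $$ (p, r) * yy r)"
      using A p by (auto simp: scalar_prod_def intro!: sum.cong)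
    also have "\<dots> = (\<Sum>r\<in>{0..<n}. Tmat n $$ (r, p) * yy r)"
      using p Tmat_carrier[of n] unfolding A_def by (auto intro!: sum.cong)
    also have "\<dots> = bb $ p" using Ay_entry[OF p] p by (simp add: bb_def E_def)
    finally show "(A *\<^sub>v vec n yy) $ p = bb $ p" .
  qed (use A in \<open>simp add: bb_def\<close>)
  have D: "det A = Dh n" unfolding A_def Dh_def using det_transpose[OF Tmat_carrier] by simp
  have Dni_eq: "Dni n i = det (replace_col A (vec n (\<lambda>p. if p = 0 then 1 else 0)) j)"
    unfolding Dni_def replace_col_def j_def using A
    by (intro arg_cong[of _ _ det] eq_matI) (auto simp: A_def)
  also have "\<dots> = (\<Sum>p\<in>{0..<n}. G $$ (j, p) * (if p = 0 then 1 else 0))"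
    unfolding G_def by (subst det_replace_col_adj[OF A _ j]) (simp_all add: adj_vec_entry[OF A j])
  also have "\<dots> = (\<Sum>p\<in>{0..<n}. if p = 0 then G $$ (j, 0) else 0)"
    by (rule sum.cong) auto
  also have "\<dots> = G $$ (j, 0)" using n0 by (simp only: sum_delta_cond) simp
  finally have Dni1: "Dni n i = G $$ (j, 0)" .
  have "yy j * Dh n = det (replace_col A (A *\<^sub>v vec n yy) j)"
    using cramer_lemma_mat[OF A yv j] D j by simp
  also have "\<dots> = (\<Sum>p\<in>{0..<n}. G $$ (j, p) * ((if p = 0 then 1 else 0) + (if Suc p = n then E else 0)))"
    unfolding Ay G_def bb_def by (subst det_replace_col_adj[OF A _ j]) (simp_all add: adj_vec_entry[OF A j])
  also have "\<dots> = (\<Sum>p\<in>{0..<n}. (if p = 0 then G $$ (j, 0) else 0) + (if p = n - 1 then G $$ (j, n - 1) * E else 0))"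
    by (rule sum.cong) (auto simp: algebra_simps)
  also have "\<dots> = G $$ (j, 0) + G $$ (j, n - 1) * E" using n0
    by (simp only: sum.distrib sum_delta_cond) simp
  finally have key: "Dni n i = yy j * Dh n - E * G $$ (j, n - 1)" using Dni1 by (simp add: algebra_simps)
  have d0: "fps_nth (Dh n) 0 \<noteq> 0" using Dh0 by simp
  have "Dni n i / Dh n = (yy j * Dh n - E * G $$ (j, n - 1)) * inverse (Dh n)"
    unfolding key by (rule fps_divide_unit[OF d0])
  also have "\<dots> = yy j * (Dh n * inverse (Dh n)) - E * G $$ (j, n - 1) * inverse (Dh n)"
    by (simp add: algebra_simps)
  also have "\<dots> = yy j - fps_X ^ (n + 2) * (ww n * G $$ (j, n - 1) * inverse (Dh n))"
    using inverse_mult_eq_1'[OF d0] unfolding E_def yy_def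
    by (simp add: power_add ac_simps power2_eq_square)
  finally have R: "Dni n i / Dh n = yy j - fps_X ^ (n + 2) * (ww n * G $$ (j, n - 1) * inverse (Dh n))" .
  define Z where "Z = ww n * G $$ (j, n - 1) * inverse (Dh n)"
  have z: "fps_nth (fps_X ^ (n + 2) * Z) k = 0" using kN by (simp only: fps_X_power_mult_nth) simp
  have "fps_nth (Dni n i / Dh n) k = fps_nth (yy j) k - fps_nth (fps_X ^ (n + 2) * Z) k"
    unfolding R Z_def by (rule fps_sub_nth)
  then show ?thesis using z unfolding j_def by simp
qed


theorem mainTheorem6:
  fixes \<phi> :: "complex fps \<Rightarrow> 'b :: field" and \<mu>2 \<mu>3 :: 'b
  shows
    "Abs_fps (\<lambda>i. tau i - tser * tau_prev i)
       = fps_X * (1 - fps_const tser * fps_X)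
           / (1 - 2 * fps_X + fps_X ^ 2 - fps_const (fps_X ^ 3) * fps_X ^ 3)
   \<and> Abs_fps (\<lambda>i. tau i - tser * tau_prev i)
       = fps_X / (1 - fps_const (2 - tser) * fps_X + fps_const ((1 - tser) ^ 2) * fps_X ^ 2)
   \<and> ((is_ring_hom \<phi> \<and> inj \<phi> \<and> \<mu>2 + \<mu>3 = \<phi> (2 - tser) \<and> \<mu>2 * \<mu>3 = \<phi> ((1 - tser) ^ 2))
       \<longrightarrow> (\<forall>i. \<phi> (tau i - tser * tau_prev i) = (\<mu>3 ^ i - \<mu>2 ^ i) / (\<mu>3 - \<mu>2)))
   \<and> (\<forall>i \<ge> 1. \<forall>k.
        (\<lambda>n. fps_nth (Dni n i / Dh n) k) \<longlonglongrightarrow>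
        fps_nth (tser ^ i / fps_X ^ (2 * i + 1)
           * fps_nth (fps_X / (1 - fps_const (2 - tser) * fps_X + fps_const ((1 - tser) ^ 2) * fps_X ^ 2)) i) k)"
proof -
  have 4: "\<forall>i \<ge> 1. \<forall>k.
        (\<lambda>n. fps_nth (Dni n i / Dh n) k) \<longlonglongrightarrow>
        fps_nth (tser ^ i / fps_X ^ (2 * i + 1)
           * fps_nth (fps_X / (1 - fps_const (2 - tser) * fps_X + fps_const ((1 - tser) ^ 2) * fps_X ^ 2)) i) k"
  proof (intro allI impI)
    fix i k :: nat assume i: "1 \<le> i"
    obtain q where q: "i = Suc q" using i by (cases i) auto
    have tgt: "tser ^ i / fps_X ^ (2 * i + 1) * fps_nth (fps_X / PP) i = yy (i - 1)"
      using yy_eq[of q] q by (simp add: cc_def)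
    show "(\<lambda>n. fps_nth (Dni n i / Dh n) k) \<longlonglongrightarrow>
        fps_nth (tser ^ i / fps_X ^ (2 * i + 1) * fps_nth (fps_X / PP) i) k"
      unfolding tgt
      by (rule tendsto_eventually, rule eventually_sequentiallyI[of "max i (Suc k)"], rule main_ratio[OF i]) auto
  qed
  show ?thesis using part12 part3 4 by blast
qed

end
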